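(* Let $G=(V,E,w)$ be an undirected graph without self-loops, with at least two vertices, positive edge weights and conductance $\Phi_G$, and let $\mathcal{T}$ be any HC tree of $G$. Let $(A_0,A_1,\dots,A_k)$, $k\ge 0$, be the dense branch of $\mathcal{T}$, and for $1\le i\le k$ let $B_i$ be the sibling of $A_i$. Then \begin{enumerate} \item $\mathrm{cost}_G(\mathcal{T}) \ge \frac{\Phi_G}{2}\sum_{i=1}^k |A_{i-1}|\cdot\mathrm{vol}(B_i)$; \item $\mathrm{cost}_G(\mathcal{T}) \ge \frac{\Phi_G}{2}\cdot |A_k|\cdot \mathrm{vol}(A_k)$. \end{enumerate}
   Context: $d_u=\sum_v w_{uv}$, $\mathrm{vol}(S)=\sum_{u\in S}d_u$, $\mathrm{vol}(G)=\mathrm{vol}(V)$. Conductance: $\Phi_G(S)=w(S,V\setminus S)/\mathrm{vol}(S)$ and $\Phi_G=\min\{\Phi_G(S):\emptyset\ne S\subset V,\ \mathrm{vol}(S)\le\mathrm{vol}(V)/2\}$. An HC tree is a rooted binary tree whose leaves are in bijection with $V$; each node is identified with the set of vertices at the leaves of its subtree, and $|N|$ denotes the number of such vertices. $\mathrm{cost}_G(\mathcal{T})=\sum_{\{u,v\}\in E}w_{uv}|\mathsf{leaves}(\mathcal{T}[u\vee v])|$ with $u\vee v$ the lowest common ancestor. Dense branch: the path $(A_0,\dots,A_k)$ in $\mathcal{T}$ where $A_0$ is the root, each $A_{i+1}$ is the child of $A_i$ of larger volume, and $A_k$ is the node with $\mathrm{vol}(A_k)>\mathrm{vol}(G)/2$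 both of whose children have volume at most $\mathrm{vol}(G)/2$ (equivalently, the dense branch consists of all nodes of volume $>\mathrm{vol}(G)/2$). *)

theory Defs
  imports Complex_Main
begin

(* Weighted undirected graph G = (V, E, w): E is a set of 2-element subsets of V,
   w assigns a weight to each edge. *)

definition degree :: "'a set set \<Rightarrow> ('a set \<Rightarrow> real) \<Rightarrow> 'a \<Rightarrow> real" where
  "degree E w u = (\<Sum>e\<in>{e\<in>E. u \<in> e}. w e)"

definition vol :: "'a set set \<Rightarrow> ('a set \<Rightarrow> real) \<Rightarrow> 'a set \<Rightarrow> real" where
  "vol E w S = (\<Sum>u\<in>S. degree E w u)"

definition cut_weight :: "'a set \<Rightarrow> 'a set set \<Rightarrow> ('a set \<Rightarrow> real) \<Rightarrow> 'a set \<Rightarrow> real" where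
  "cut_weight V E w S = (\<Sum>e\<in>{e\<in>E. e \<inter> S \<noteq> {} \<and> e \<inter> (V - S) \<noteq> {}}. w e)"

definition set_conductance :: "'a set \<Rightarrow> 'a set set \<Rightarrow> ('a set \<Rightarrow> real) \<Rightarrow> 'a set \<Rightarrow> real" where
  "set_conductance V E w S = cut_weight V E w S / vol E w S"

definition conductance :: "'a set \<Rightarrow> 'a set set \<Rightarrow> ('a set \<Rightarrow> real) \<Rightarrow> real" where
  "conductance V E w = Min (set_conductance V E w `
      {S. S \<noteq> {} \<and> S \<subset> V \<and> vol E w S \<le> vol E w V / 2})"

datatype 'a hctree = Leaf 'a | Node "'a hctree" "'a hctree"

fun leaf_list :: "'a hctree \<Rightarrow> 'a list" where
  "leaf_list (Leaf x) = [x]"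
| "leaf_list (Node L R) = leaf_list L @ leaf_list R"

definition leaves :: "'a hctree \<Rightarrow> 'a set" where
  "leaves T = set (leaf_list T)"

definition is_hc_tree :: "'a set \<Rightarrow> 'a hctree \<Rightarrow> bool" where
  "is_hc_tree V T \<longleftrightarrow> distinct (leaf_list T) \<and> set (leaf_list T) = V"

fun subtrees :: "'a hctree \<Rightarrow> 'a hctree set" where
  "subtrees (Leaf x) = {Leaf x}"
| "subtrees (Node L R) = insert (Node L R) (subtrees L \<union> subtrees R)"

definition lca :: "'a hctree \<Rightarrow> 'a set \<Rightarrow> 'a hctree" where
  "lca T e = (THE S. S \<in> subtrees T \<and> e \<subseteq> leaves S \<and>
               (\<forall>S'\<in>subtrees T. e \<subseteq> leaves S' \<longrightarrow> S \<in> subtrees S'))"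

definition hc_cost :: "'a set set \<Rightarrow> ('a set \<Rightarrow> real) \<Rightarrow> 'a hctree \<Rightarrow> real" where
  "hc_cost E w T = (\<Sum>e\<in>E. w e * real (card (leaves (lca T e))))"

fun branch_from :: "('a set \<Rightarrow> real) \<Rightarrow> real \<Rightarrow> 'a hctree \<Rightarrow> 'a hctree list" where
  "branch_from vl h (Leaf x) = [Leaf x]"
| "branch_from vl h (Node L R) =
     Node L R # (let C = (if vl (leaves L) \<ge> vl (leaves R) then L else R) in
                 if vl (leaves C) > h then branch_from vl h C else [])"

definition dense_branch :: "'a set \<Rightarrow> 'a set set \<Rightarrow> ('a set \<Rightarrow> real) \<Rightarrow> 'a hctree \<Rightarrow> 'a hctree list" where
  "dense_branch V E w T = branch_from (vol E w) (vol E w V / 2) T"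

fun sibling :: "'a hctree \<Rightarrow> 'a hctree \<Rightarrow> 'a hctree" where
  "sibling (Node L R) C = (if C = L then R else L)"
| "sibling (Leaf x) C = Leaf x"

end

theory Submission
  imports Defs
begin


fun lcaf :: "'a hctree \<Rightarrow> 'a set \<Rightarrow> 'a hctree" where
  "lcaf (Leaf x) e = Leaf x"
| "lcaf (Node L R) e = (if e \<subseteq> leaves L then lcaf L e else if e \<subseteq> leaves R then lcaf R e else Node L R)"

lemma leaves_Node[simp]: "leaves (Node L R) = leaves L \<union> leaves R"
  by (simp add: leaves_def)
lemma leaves_Leaf[simp]: "leaves (Leaf x) = {x}"
  by (simp add: leaves_def)
lemma leaves_ne: "leaves T \<noteq> {}"
  by (induction T) auto
lemma leaves_fin[simp]: "finite (leaves T)"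
  by (simp add: leaves_def)

lemma self_sub[simp]: "T \<in> subtrees T"
  by (cases T) auto

lemma sub_trans: "S \<in> subtrees T \<Longrightarrow> subtrees S \<subseteq> subtrees T"
  by (induction T) auto

lemma sub_leaves: "S \<in> subtrees T \<Longrightarrow> leaves S \<subseteq> leaves T"
  by (induction T) auto

lemma sub_size: "S \<in> subtrees T \<Longrightarrow> size S \<le> size T"
  by (induction T) auto

lemma sub_size_strict: "S \<in> subtrees T \<Longrightarrow> S \<noteq> T \<Longrightarrow> size S < size T"
  by (induction T) (auto dest: sub_size)

lemma sub_antisym: "S \<in> subtrees T \<Longrightarrow> T \<in> subtrees S \<Longrightarrow> S = T"
  using sub_size sub_size_strict by fastforce

lemma distinct_sub: "S \<in> subtrees T \<Longrightarrow> distinct (leaf_list T) \<Longrightarrow> distinct (leaf_list S)"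
  by (induction T) auto

lemma disj_children: "distinct (leaf_list (Node L R)) \<Longrightarrow> leaves L \<inter> leaves R = {}"
  by (simp add: leaves_def)

lemma lcaf_sub: "lcaf T e \<in> subtrees T"
  by (induction T) (auto)

lemma lcaf_leaves: "e \<subseteq> leaves T \<Longrightarrow> e \<subseteq> leaves (lcaf T e)"
  by (induction T) auto

lemma lcaf_min: "distinct (leaf_list T) \<Longrightarrow> e \<noteq> {} \<Longrightarrow> S' \<in> subtrees T \<Longrightarrow> e \<subseteq> leaves S'
   \<Longrightarrow> lcaf T e \<in> subtrees S'"
proof (induction T)
  case (Leaf x)
  then show ?case by auto
next
  case (Node L R)
  have d: "leaves L \<inter> leaves R = {}" using Node.prems(1) disj_children by blast
  consider "S' = Node L R" | "S' \<in> subtrees L" | "S' \<in> subtrees R" using Node.prems(3) by auto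
  then show ?case
  proof cases
    case 1 then show ?thesis using lcaf_sub by blast
  next
    case 2
    then have eL: "e \<subseteq> leaves L" using sub_leaves Node.prems(4) by blast
    have dL: "distinct (leaf_list L)" using Node.prems(1) by simp
    have "lcaf L e \<in> subtrees S'" using Node.IH(1)[OF dL Node.prems(2) 2 Node.prems(4)] .
    then show ?thesis using eL by simp
  next
    case 3
    then have eR: "e \<subseteq> leaves R" using sub_leaves Node.prems(4) by blast
    have nL: "\<not> e \<subseteq> leaves L" using d Node.prems(2) eR by blast
    have dR: "distinct (leaf_list R)" using Node.prems(1) by simp
    have "lcaf R e \<in> subtrees S'" using Node.IH(2)[OF dR Node.prems(2) 3 Node.prems(4)] .
    then show ?thesis using eR nL by simp
  qed
qed

lemma lca_eq: "distinct (leaf_list T) \<Longrightarrow> e \<noteq> {} \<Longrightarrow> e \<subseteq> leaves T \<Longrightarrow> lca T e = lcaf T e"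
  unfolding lca_def
proof (rule the_equality)
  assume a: "distinct (leaf_list T)" "e \<noteq> {}" "e \<subseteq> leaves T"
  show "lcaf T e \<in> subtrees T \<and> e \<subseteq> leaves (lcaf T e) \<and>
    (\<forall>S'\<in>subtrees T. e \<subseteq> leaves S' \<longrightarrow> lcaf T e \<in> subtrees S')"
    using lcaf_sub[of T e] lcaf_leaves[OF a(3)] lcaf_min[OF a(1,2)] by blast
  fix S assume S: "S \<in> subtrees T \<and> e \<subseteq> leaves S \<and>
    (\<forall>S'\<in>subtrees T. e \<subseteq> leaves S' \<longrightarrow> S \<in> subtrees S')"
  have "S \<in> subtrees (lcaf T e)" using S lcaf_sub[of T e] lcaf_leaves[OF a(3)] by blast
  moreover have "lcaf T e \<in> subtrees S" using lcaf_min[OF a(1,2)] S by blast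
  ultimately show "S = lcaf T e" using sub_antisym by blast
qed

lemma lcaf_node: "distinct (leaf_list T) \<Longrightarrow> Node L R \<in> subtrees T \<Longrightarrow> C = L \<or> C = R \<Longrightarrow>
   e \<inter> leaves C \<noteq> {} \<Longrightarrow> \<not> e \<subseteq> leaves C \<Longrightarrow> e \<subseteq> leaves T \<Longrightarrow>
   card (leaves (Node L R)) \<le> card (leaves (lcaf T e))"
proof (induction T)
  case (Leaf x)
  then show ?case by auto
next
  case (Node L' R')
  have d: "leaves L' \<inter> leaves R' = {}" using Node.prems(1) disj_children by blast
  have dd: "leaves L \<inter> leaves R = {}"
    using Node.prems(1,2) disj_children distinct_sub by blast
  have CN: "leaves C \<subseteq> leaves (Node L R)" using Node.prems(3) by auto
  consider "Node L R = Node L' R'" | "Node L R \<in> subtrees L'" | "Node L R \<in> subtrees R'"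
    using Node.prems(2) by auto
  then show ?case
  proof cases
    case 1
    have "\<not> e \<subseteq> leaves L'" "\<not> e \<subseteq> leaves R'"
      using 1 Node.prems(3,4,5) dd by auto
    then show ?thesis using 1 by simp
  next
    case 2
    have CL: "leaves C \<subseteq> leaves L'" using CN sub_leaves[OF 2] by blast
    show ?thesis
    proof (cases "e \<subseteq> leaves L'")
      case True
      then show ?thesis using Node.IH(1)[OF _ 2 Node.prems(3,4,5) True] Node.prems(1) by simp
    next
      case False
      then have "\<not> e \<subseteq> leaves R'" using CL d Node.prems(4) by blast
      then have "lcaf (Node L' R') e = Node L' R'" using False by simp
      then show ?thesis using sub_leaves[OF Node.prems(2)]
        by (simp add: card_mono)
    qed
  next
    case 3
    have CL: "leaves C \<subseteq> leaves R'" using CN sub_leaves[OF 3] by blast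
    have nL: "\<not> e \<subseteq> leaves L'" using CL d Node.prems(4) by blast
    show ?thesis
    proof (cases "e \<subseteq> leaves R'")
      case True
      then show ?thesis using Node.IH(2)[OF _ 3 Node.prems(3,4,5) True] Node.prems(1) nL by simp
    next
      case False
      then have "lcaf (Node L' R') e = Node L' R'" using nL by simp
      then show ?thesis using sub_leaves[OF Node.prems(2)]
        by (simp add: card_mono)
    qed
  qed
qed



lemma branch_facts:
  fixes vl :: "'a set \<Rightarrow> real"
  shows "branch_from vl h T \<noteq> [] \<and> hd (branch_from vl h T) = T \<and>
   (\<forall>i < length (branch_from vl h T). branch_from vl h T ! i \<in> subtrees T) \<and>
   (\<forall>i. Suc i < length (branch_from vl h T) \<longrightarrow>
      (\<exists>L R. branch_from vl h T ! i = Node L R \<and>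
        ((branch_from vl h T ! Suc i = L \<and> sibling (Node L R) (branch_from vl h T ! Suc i) = R) \<or>
         (branch_from vl h T ! Suc i = R \<and> sibling (Node L R) (branch_from vl h T ! Suc i) = L)) \<and>
        vl (leaves (sibling (Node L R) (branch_from vl h T ! Suc i))) \<le> vl (leaves (branch_from vl h T ! Suc i)))) \<and>
   ((\<exists>x. last (branch_from vl h T) = Leaf x) \<or>
    (\<exists>L R. last (branch_from vl h T) = Node L R \<and> vl (leaves L) \<le> h \<and> vl (leaves R) \<le> h))"
proof (induction vl h T rule: branch_from.induct)
  case (1 vl h x)
  then show ?case by simp
next
  case (2 vl h L R)
  define C where "C = (if vl (leaves L) \<ge> vl (leaves R) then L else R)"
  have Csib: "(C = L \<and> sibling (Node L R) C = R) \<or> (C = R \<and> sibling (Node L R) C = L)"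
    unfolding C_def by auto
  have Cvl: "vl (leaves (sibling (Node L R) C)) \<le> vl (leaves C)"
    using Csib unfolding C_def by (auto split: if_splits)
  have Csub: "subtrees C \<subseteq> subtrees (Node L R)" unfolding C_def by auto
  show ?case
  proof (cases "vl (leaves C) > h")
    case False
    then have eq: "branch_from vl h (Node L R) = [Node L R]" by (simp add: C_def Let_def)
    have "vl (leaves L) \<le> h \<and> vl (leaves R) \<le> h" using False unfolding C_def by (auto split: if_splits)
    then show ?thesis unfolding eq by auto
  next
    case True
    let ?B = "branch_from vl h C"
    have eq: "branch_from vl h (Node L R) = Node L R # ?B" using True by (simp add: C_def Let_def)
    have IH: "?B \<noteq> [] \<and> hd ?B = C \<and>
   (\<forall>i < length ?B. ?B ! i \<in> subtrees C) \<and>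
   (\<forall>i. Suc i < length ?B \<longrightarrow>
      (\<exists>L R. ?B ! i = Node L R \<and>
        ((?B ! Suc i = L \<and> sibling (Node L R) (?B ! Suc i) = R) \<or>
         (?B ! Suc i = R \<and> sibling (Node L R) (?B ! Suc i) = L)) \<and>
        vl (leaves (sibling (Node L R) (?B ! Suc i))) \<le> vl (leaves (?B ! Suc i)))) \<and>
   ((\<exists>x. last ?B = Leaf x) \<or>
    (\<exists>L R. last ?B = Node L R \<and> vl (leaves L) \<le> h \<and> vl (leaves R) \<le> h))"
      using "2.IH"[OF C_def True] .
    have B0: "?B ! 0 = C" using IH by (metis hd_conv_nth)
    have P1: "\<forall>i < length (Node L R # ?B). (Node L R # ?B) ! i \<in> subtrees (Node L R)"
    proof (intro allI impI)
      fix i assume "i < length (Node L R # ?B)"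
      then show "(Node L R # ?B) ! i \<in> subtrees (Node L R)"
        using IH Csub by (cases i) auto
    qed
    have P2: "\<forall>i. Suc i < length (Node L R # ?B) \<longrightarrow>
      (\<exists>L' R'. (Node L R # ?B) ! i = Node L' R' \<and>
        (((Node L R # ?B) ! Suc i = L' \<and> sibling (Node L' R') ((Node L R # ?B) ! Suc i) = R') \<or>
         ((Node L R # ?B) ! Suc i = R' \<and> sibling (Node L' R') ((Node L R # ?B) ! Suc i) = L')) \<and>
        vl (leaves (sibling (Node L' R') ((Node L R # ?B) ! Suc i))) \<le> vl (leaves ((Node L R # ?B) ! Suc i)))"
    proof (intro allI impI)
      fix i assume i: "Suc i < length (Node L R # ?B)"
      show "\<exists>L' R'. (Node L R # ?B) ! i = Node L' R' \<and>
        (((Node L R # ?B) ! Suc i = L' \<and> sibling (Node L' R') ((Node L R # ?B) ! Suc i) = R') \<or>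
         ((Node L R # ?B) ! Suc i = R' \<and> sibling (Node L' R') ((Node L R # ?B) ! Suc i) = L')) \<and>
        vl (leaves (sibling (Node L' R') ((Node L R # ?B) ! Suc i))) \<le> vl (leaves ((Node L R # ?B) ! Suc i))"
      proof (cases i)
        case 0
        then show ?thesis using B0 Csib Cvl by auto
      next
        case (Suc j)
        then show ?thesis using IH i by auto
      qed
    qed
    have P3: "last (Node L R # ?B) = last ?B" using IH by simp
    show ?thesis unfolding eq using P1 P2 P3 IH by simp
  qed
qed



lemma card_hit_le1:
  assumes "finite J" "\<forall>i\<in>J. \<forall>j\<in>J. i \<noteq> j \<longrightarrow> S i \<inter> S j = {}"
  shows "card {j\<in>J. a \<in> S j} \<le> 1"
  using assms by (subst One_nat_def, subst card_le_Suc0_iff_eq) auto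

lemma charge:
  fixes J :: "'b set" and S :: "'b \<Rightarrow> 'a set" and c :: "'b \<Rightarrow> real" and f :: "'a set \<Rightarrow> real"
  assumes finJ: "finite J" and finE: "finite E" and c2: "\<forall>e\<in>E. card e = 2"
    and wnn: "\<forall>e\<in>E. w e \<ge> 0"
    and disj: "\<forall>i\<in>J. \<forall>j\<in>J. i \<noteq> j \<longrightarrow> S i \<inter> S j = {}"
    and cnn: "\<forall>j\<in>J. c j \<ge> 0" and fnn: "\<forall>e\<in>E. f e \<ge> 0"
    and bnd: "\<forall>j\<in>J. \<forall>e\<in>E. e \<inter> S j \<noteq> {} \<and> e \<inter> (V - S j) \<noteq> {} \<longrightarrow> c j \<le> f e"
  shows "(\<Sum>j\<in>J. c j * cut_weight V E w (S j)) \<le> 2 * (\<Sum>e\<in>E. w e * f e)"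
proof -
  define X where "X j e \<longleftrightarrow> e \<inter> S j \<noteq> {} \<and> e \<inter> (V - S j) \<noteq> {}" for j e
  have cw: "cut_weight V E w (S j) = (\<Sum>e\<in>E. if X j e then w e else 0)" for j
    unfolding cut_weight_def X_def using finE by (simp add: sum.inter_filter)
  have "(\<Sum>j\<in>J. c j * cut_weight V E w (S j)) = (\<Sum>j\<in>J. \<Sum>e\<in>E. c j * (if X j e then w e else 0))"
    by (simp add: cw sum_distrib_left)
  also have "\<dots> = (\<Sum>e\<in>E. \<Sum>j\<in>J. c j * (if X j e then w e else 0))"
    by (rule sum.swap)
  also have "\<dots> = (\<Sum>e\<in>E. w e * (\<Sum>j\<in>{j\<in>J. X j e}. c j))"
  proof (rule sum.cong[OF refl])
    fix e
    have "(\<Sum>j\<in>J. c j * (if X j e then w e else 0)) = (\<Sum>j\<in>J. if X j e then w e * c j else 0)"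
      by (rule sum.cong) auto
    also have "\<dots> = (\<Sum>j\<in>{j\<in>J. X j e}. w e * c j)" using finJ by (simp add: sum.inter_filter)
    finally show "(\<Sum>j\<in>J. c j * (if X j e then w e else 0)) = w e * (\<Sum>j\<in>{j\<in>J. X j e}. c j)"
      by (simp add: sum_distrib_left)
  qed
  also have "\<dots> \<le> (\<Sum>e\<in>E. w e * (2 * f e))"
  proof (rule sum_mono)
    fix e assume eE: "e \<in> E"
    obtain a b where ab: "e = {a, b}" using c2 eE by (meson card_2_iff)
    have sub: "{j\<in>J. X j e} \<subseteq> {j\<in>J. a \<in> S j} \<union> {j\<in>J. b \<in> S j}"
      unfolding X_def ab by auto
    have "card {j\<in>J. X j e} \<le> card ({j\<in>J. a \<in> S j} \<union> {j\<in>J. b \<in> S j})"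
      using sub finJ by (intro card_mono) auto
    also have "\<dots> \<le> card {j\<in>J. a \<in> S j} + card {j\<in>J. b \<in> S j}" by (rule card_Un_le)
    also have "\<dots> \<le> 2" using card_hit_le1[OF finJ disj, of a] card_hit_le1[OF finJ disj, of b] by simp
    finally have cd: "card {j\<in>J. X j e} \<le> 2" .
    have "(\<Sum>j\<in>{j\<in>J. X j e}. c j) \<le> (\<Sum>j\<in>{j\<in>J. X j e}. f e)"
      using bnd eE unfolding X_def by (intro sum_mono) auto
    also have "\<dots> = real (card {j\<in>J. X j e}) * f e" by simp
    also have "\<dots> \<le> 2 * f e" using cd fnn eE
      by (intro mult_right_mono) auto
    finally show "w e * (\<Sum>j\<in>{j\<in>J. X j e}. c j) \<le> w e * (2 * f e)"
      using wnn eE by (intro mult_left_mono) auto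
  qed
  also have "\<dots> = 2 * (\<Sum>e\<in>E. w e * f e)" by (simp add: sum_distrib_left algebra_simps)
  finally show ?thesis .
qed

lemma degree_nn: "\<forall>e\<in>E. w e \<ge> 0 \<Longrightarrow> degree E w u \<ge> 0"
  unfolding degree_def by (intro sum_nonneg) auto

lemma vol_nn: "\<forall>e\<in>E. w e \<ge> 0 \<Longrightarrow> vol E w S \<ge> 0"
  unfolding vol_def using degree_nn by (metis sum_nonneg)

lemma vol_mono: "\<forall>e\<in>E. w e \<ge> 0 \<Longrightarrow> finite B \<Longrightarrow> A \<subseteq> B \<Longrightarrow> vol E w A \<le> vol E w B"
  unfolding vol_def using degree_nn by (metis sum_mono2)

lemma vol_union: "finite A \<Longrightarrow> finite B \<Longrightarrow> A \<inter> B = {} \<Longrightarrow> vol E w (A \<union> B) = vol E w A + vol E w B"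
  unfolding vol_def by (rule sum.union_disjoint)

lemma cut_nn: "\<forall>e\<in>E. w e \<ge> 0 \<Longrightarrow> cut_weight V E w S \<ge> 0"
  unfolding cut_weight_def by (intro sum_nonneg) auto

lemma cond_bound:
  assumes finV: "finite V" and wnn: "\<forall>e\<in>E. w e \<ge> 0"
    and S: "S \<noteq> {}" "S \<subset> V" "vol E w S \<le> vol E w V / 2"
  shows "conductance V E w * vol E w S \<le> cut_weight V E w S"
proof -
  let ?F = "{S. S \<noteq> {} \<and> S \<subset> V \<and> vol E w S \<le> vol E w V / 2}"
  have fin: "finite ?F" by (rule finite_subset[of _ "Pow V"]) (auto simp: finV)
  have "conductance V E w \<le> set_conductance V E w S"
    unfolding conductance_def using fin S by (intro Min_le) auto
  show ?thesis
  proof (cases "vol E w S = 0")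
    case True then show ?thesis using cut_nn[OF wnn] by simp
  next
    case False
    then have pos: "vol E w S > 0" using vol_nn[OF wnn, of S] by simp
    have "conductance V E w * vol E w S \<le> set_conductance V E w S * vol E w S"
      using \<open>conductance V E w \<le> set_conductance V E w S\<close> pos by (intro mult_right_mono) auto
    also have "\<dots> = cut_weight V E w S" unfolding set_conductance_def using pos by simp
    finally show ?thesis .
  qed
qed

lemma cut_single:
  assumes edges: "\<forall>e\<in>E. e \<subseteq> V \<and> card e = 2" and x: "x \<in> V"
  shows "cut_weight V E w {x} = degree E w x"
proof -
  have "{e\<in>E. e \<inter> {x} \<noteq> {} \<and> e \<inter> (V - {x}) \<noteq> {}} = {e\<in>E. x \<in> e}"
  proof (intro set_eqI iffI)
    fix e assume "e \<in> {e\<in>E. x \<in> e}"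
    then have eE: "e \<in> E" "x \<in> e" by auto
    obtain a b where ab: "e = {a,b}" "a \<noteq> b" using edges eE by (meson card_2_iff)
    have "e \<subseteq> V" using edges eE by auto
    then have "e \<inter> (V - {x}) \<noteq> {}" using ab by auto
    then show "e \<in> {e\<in>E. e \<inter> {x} \<noteq> {} \<and> e \<inter> (V - {x}) \<noteq> {}}" using eE by auto
  qed auto
  then show ?thesis unfolding cut_weight_def degree_def by simp
qed

lemma cond_le1:
  assumes finV: "finite V" and twoV: "card V \<ge> 2" and edges: "\<forall>e\<in>E. e \<subseteq> V \<and> card e = 2"
    and wnn: "\<forall>e\<in>E. w e \<ge> 0"
  shows "conductance V E w \<le> 1"
proof -
  obtain a b where ab: "a \<in> V" "b \<in> V" "a \<noteq> b"
  proof -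
    obtain B where "B \<subseteq> V" "card B = 2" using obtain_subset_with_card_n[OF twoV] by metis
    then show ?thesis using that by (metis card_2_iff insert_subset)
  qed
  have "vol E w {a,b} = degree E w a + degree E w b" using ab by (simp add: vol_def)
  moreover have "vol E w {a,b} \<le> vol E w V" using ab finV wnn by (intro vol_mono) auto
  ultimately obtain x y where xy: "x \<in> V" "y \<in> V" "x \<noteq> y" "degree E w x \<le> vol E w V / 2"
  proof (cases "degree E w a \<le> vol E w V / 2")
    case True then show ?thesis using that ab by blast
  next
    case False
    then have "degree E w b \<le> vol E w V / 2"
      using \<open>vol E w {a,b} = degree E w a + degree E w b\<close> \<open>vol E w {a,b} \<le> vol E w V\<close> by linarith
    then show ?thesis using that ab by blast
  qed
  let ?F = "{S. S \<noteq> {} \<and> S \<subset> V \<and> vol E w S \<le> vol E w V / 2}"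
  have fin: "finite ?F" by (rule finite_subset[of _ "Pow V"]) (auto simp: finV)
  have mem: "{x} \<in> ?F" using xy by (auto simp: vol_def)
  have "conductance V E w \<le> set_conductance V E w {x}"
    unfolding conductance_def using fin mem by (intro Min_le) auto
  also have "\<dots> \<le> 1"
  proof -
    have "cut_weight V E w {x} = vol E w {x}" using cut_single[OF edges xy(1)] by (simp add: vol_def)
    then show ?thesis unfolding set_conductance_def
      by (metis div_self divide_eq_0_iff order_refl zero_le_one)
  qed
  finally show ?thesis .
qed



lemma child_facts:
  assumes d: "distinct (leaf_list T)" and VT: "leaves T = V" and N: "Node L R \<in> subtrees T"
    and CD: "(C = L \<and> D = R) \<or> (C = R \<and> D = L)"
  shows "leaves C \<noteq> {} \<and> leaves C \<subset> V \<and> leaves C \<inter> leaves D = {} \<and>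
         vol E w (leaves (Node L R)) = vol E w (leaves C) + vol E w (leaves D)"
proof -
  have dj: "leaves L \<inter> leaves R = {}" using d N disj_children distinct_sub by blast
  have sV: "leaves (Node L R) \<subseteq> V" using sub_leaves[OF N] VT by simp
  have "leaves C \<inter> leaves D = {}" using CD dj by auto
  moreover have "leaves C \<subseteq> V" "leaves D \<subseteq> V" using CD sV by auto
  moreover have "leaves C \<noteq> {}" "leaves D \<noteq> {}" using leaves_ne by auto
  ultimately have "leaves C \<subset> V" by blast
  moreover have "vol E w (leaves (Node L R)) = vol E w (leaves C) + vol E w (leaves D)"
    using CD dj vol_union[of "leaves L" "leaves R" E w] by (auto simp: Un_commute inf_commute)
  ultimately show ?thesis using \<open>leaves C \<inter> leaves D = {}\<close> leaves_ne by blast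
qed

theorem mainTheorem4:
  fixes V :: "'a set" and E :: "'a set set" and w :: "'a set \<Rightarrow> real" and T :: "'a hctree"
  assumes finV: "finite V"
    and twoV: "card V \<ge> 2"
    and edges: "\<forall>e\<in>E. e \<subseteq> V \<and> card e = 2"
    and wpos: "\<forall>e\<in>E. w e > 0"
    and hc: "is_hc_tree V T"
    and As: "As = dense_branch V E w T"
    and k: "k = length As - 1"
  shows "hc_cost E w T \<ge> conductance V E w / 2 *
           (\<Sum>i=1..k. real (card (leaves (As ! (i - 1)))) *
                       vol E w (leaves (sibling (As ! (i - 1)) (As ! i)))) \<and>
         hc_cost E w T \<ge> conductance V E w / 2 *
           real (card (leaves (As ! k))) * vol E w (leaves (As ! k))"
proof -
  have wnn: "\<forall>e\<in>E. w e \<ge> 0" using wpos by (simp add: less_imp_le)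
  have finE: "finite E" using finV edges by (intro finite_subset[of E "Pow V"]) auto
  have c2: "\<forall>e\<in>E. card e = 2" using edges by blast
  have dT: "distinct (leaf_list T)" and VT: "leaves T = V"
    using hc by (auto simp: is_hc_tree_def leaves_def)
  define h where "h = vol E w V / 2"
  have As': "As = branch_from (vol E w) h T" using As by (simp add: dense_branch_def h_def)
  note BF = branch_facts[of "vol E w" h T, folded As']
  note ne = BF[THEN conjunct1]
  note sub = BF[THEN conjunct2, THEN conjunct2, THEN conjunct1]
  note stepA = BF[THEN conjunct2, THEN conjunct2, THEN conjunct2, THEN conjunct1]
  note lastf = BF[THEN conjunct2, THEN conjunct2, THEN conjunct2, THEN conjunct2]
  have step: "\<exists>L R. As ! i = Node L R \<and>
        ((As ! Suc i = L \<and> sibling (Node L R) (As ! Suc i) = R) \<or>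
         (As ! Suc i = R \<and> sibling (Node L R) (As ! Suc i) = L)) \<and>
        vol E w (leaves (sibling (Node L R) (As ! Suc i))) \<le> vol E w (leaves (As ! Suc i))"
    if "Suc i < length As" for i
    using mp[OF spec[OF stepA, of i] that] .
  have kl: "k < length As" "As ! k = last As" using ne k by (auto simp: last_conv_nth)
  define f where "f e = real (card (leaves (lca T e)))" for e
  have cost: "hc_cost E w T = (\<Sum>e\<in>E. w e * f e)" unfolding hc_cost_def f_def by simp
  have fnn: "\<forall>e\<in>E. f e \<ge> 0" unfolding f_def by simp
  have lcaE: "lca T e = lcaf T e" if "e \<in> E" for e
  proof -
    have "e \<noteq> {}" using c2 that by fastforce
    then show ?thesis using lca_eq[OF dT] edges that VT by auto
  qed
  have nodeb: "real (card (leaves (Node L R))) \<le> f e"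
    if "Node L R \<in> subtrees T" "C = L \<or> C = R" "e \<in> E"
       "e \<inter> leaves C \<noteq> {} \<and> e \<inter> (V - leaves C) \<noteq> {}" for L R C e
  proof -
    have "\<not> e \<subseteq> leaves C" using that(4) by blast
    then show ?thesis unfolding f_def lcaE[OF that(3)]
      using lcaf_node[OF dT that(1,2)] that edges VT by auto
  qed
  have Phi_le: "conductance V E w \<le> 1" using cond_le1[OF finV twoV edges wnn] .
  have vV: "vol E w (leaves N) \<le> vol E w V" if "N \<in> subtrees T" for N
    using vol_mono[OF wnn finV, of "leaves N"] sub_leaves[OF that] VT by simp
  define S where "S i = leaves (sibling (As ! (i - 1)) (As ! i))" for i
  define c where "c i = real (card (leaves (As ! (i - 1))))" for i
  have chain: "leaves (As ! m) \<subseteq> leaves (As ! n)" if "n \<le> m" "m < length As" for n m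
    using that
  proof (induction m)
    case 0 then show ?case by simp
  next
    case (Suc m)
    obtain L R where "As ! m = Node L R" "As ! Suc m = L \<or> As ! Suc m = R"
      using step[OF Suc.prems(2)] by blast
    then have "leaves (As ! Suc m) \<subseteq> leaves (As ! m)" by auto
    then show ?case using Suc by (cases "n = Suc m") auto
  qed
  have ifacts: "S i \<noteq> {}" "S i \<subset> V" "S i \<inter> leaves (As ! i) = {}"
      "S i \<subseteq> leaves (As ! (i - 1))" "vol E w (S i) \<le> vol E w V / 2"
      "\<forall>e\<in>E. e \<inter> S i \<noteq> {} \<and> e \<inter> (V - S i) \<noteq> {} \<longrightarrow> c i \<le> f e"
    if "i \<in> {1..k}" for i
  proof -
    have si: "Suc (i - 1) < length As" "Suc (i - 1) = i" using that kl by auto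
    obtain L R where LR: "As ! (i - 1) = Node L R"
      "(As ! i = L \<and> sibling (Node L R) (As ! i) = R) \<or> (As ! i = R \<and> sibling (Node L R) (As ! i) = L)"
      "vol E w (leaves (sibling (Node L R) (As ! i))) \<le> vol E w (leaves (As ! i))"
      using step[OF si(1)] unfolding si(2) by blast
    have NT: "Node L R \<in> subtrees T" using sub si LR(1) by (metis Suc_lessD)
    have Sdef: "S i = leaves (sibling (Node L R) (As ! i))" unfolding S_def LR(1) ..
    have CD: "(sibling (Node L R) (As ! i) = L \<and> As ! i = R) \<or> (sibling (Node L R) (As ! i) = R \<and> As ! i = L)"
      using LR(2) by blast
    note cf = child_facts[OF dT VT NT CD, of E w]
    have "vol E w (leaves (Node L R)) \<le> vol E w V" using vV[OF NT] .
    then have vS: "vol E w (S i) \<le> vol E w V / 2" using cf LR(3) Sdef by simp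
    have subS: "S i \<subseteq> leaves (As ! (i - 1))" using Sdef CD LR(1) by auto
    have bS: "\<forall>e\<in>E. e \<inter> S i \<noteq> {} \<and> e \<inter> (V - S i) \<noteq> {} \<longrightarrow> c i \<le> f e"
    proof (intro ballI impI)
      fix e assume "e \<in> E" "e \<inter> S i \<noteq> {} \<and> e \<inter> (V - S i) \<noteq> {}"
      then show "c i \<le> f e" using nodeb[OF NT _ \<open>e \<in> E\<close>, of "sibling (Node L R) (As ! i)"] CD Sdef
        unfolding c_def LR(1) by auto
    qed
    have cf1: "leaves (sibling (Node L R) (As ! i)) \<noteq> {}"
      "leaves (sibling (Node L R) (As ! i)) \<subset> V"
      "leaves (sibling (Node L R) (As ! i)) \<inter> leaves (As ! i) = {}"
      using cf by blast+
    show "S i \<noteq> {}" "S i \<subset> V" "S i \<inter> leaves (As ! i) = {}"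
      "S i \<subseteq> leaves (As ! (i - 1))" "vol E w (S i) \<le> vol E w V / 2"
      "\<forall>e\<in>E. e \<inter> S i \<noteq> {} \<and> e \<inter> (V - S i) \<noteq> {} \<longrightarrow> c i \<le> f e"
      using cf1 Sdef vS subS bS by simp_all
  qed
  have disj: "\<forall>i\<in>{1..k}. \<forall>j\<in>{1..k}. i \<noteq> j \<longrightarrow> S i \<inter> S j = {}"
  proof -
    have lt: "S i \<inter> S j = {}" if "i \<in> {1..k}" "j \<in> {1..k}" "i < j" for i j
    proof -
      have "S j \<subseteq> leaves (As ! (j - 1))" using ifacts(4)[OF that(2)] .
      also have "\<dots> \<subseteq> leaves (As ! i)"
      proof (rule chain)
        show "i \<le> j - 1" using that by simp
        show "j - 1 < length As" using that kl by simp
      qed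
      finally show ?thesis using ifacts(3)[OF that(1)] by blast
    qed
    show ?thesis
    proof (intro ballI impI)
      fix i j assume "i \<in> {1..k}" "j \<in> {1..k}" "i \<noteq> j"
      then show "S i \<inter> S j = {}"
      proof (cases "i < j")
        case True then show ?thesis using lt[of i j] \<open>i \<in> {1..k}\<close> \<open>j \<in> {1..k}\<close> by blast
      next
        case False
        then have "j < i" using \<open>i \<noteq> j\<close> by simp
        then have "S j \<inter> S i = {}" using lt[of j i] \<open>i \<in> {1..k}\<close> \<open>j \<in> {1..k}\<close> by blast
        then show ?thesis by blast
      qed
    qed
  qed
  have c1: "conductance V E w / 2 * (\<Sum>i=1..k. c i * vol E w (S i)) \<le> hc_cost E w T"
  proof -
    have "conductance V E w * (\<Sum>i=1..k. c i * vol E w (S i)) = (\<Sum>i=1..k. c i * (conductance V E w * vol E w (S i)))"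
      by (simp add: sum_distrib_left algebra_simps)
    also have "\<dots> \<le> (\<Sum>i=1..k. c i * cut_weight V E w (S i))"
    proof (rule sum_mono)
      fix i assume i: "i \<in> {1..k}"
      have "conductance V E w * vol E w (S i) \<le> cut_weight V E w (S i)"
        using cond_bound[OF finV wnn ifacts(1,2,5)[OF i]] .
      then show "c i * (conductance V E w * vol E w (S i)) \<le> c i * cut_weight V E w (S i)"
        by (intro mult_left_mono) (auto simp: c_def)
    qed
    also have "\<dots> \<le> 2 * (\<Sum>e\<in>E. w e * f e)"
      by (rule charge[OF _ finE c2 wnn disj _ fnn]) (use ifacts(6) in \<open>auto simp: c_def\<close>)
    finally show ?thesis unfolding cost by simp
  qed
  have c2': "conductance V E w / 2 * real (card (leaves (As ! k))) * vol E w (leaves (As ! k)) \<le> hc_cost E w T"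
  proof (cases "\<exists>x. last As = Leaf x")
    case True
    then obtain x where x: "As ! k = Leaf x" using kl(2) by auto
    have "As ! k \<in> subtrees T" using sub kl(1) by blast
    then have "leaves (As ! k) \<subseteq> V" using sub_leaves VT by blast
    then have xV: "x \<in> V" using x by simp
    have "(\<Sum>j\<in>{0::nat}. 1 * cut_weight V E w {x}) \<le> 2 * (\<Sum>e\<in>E. w e * f e)"
    proof (rule charge[OF _ finE c2 wnn _ _ fnn])
      show "\<forall>j\<in>{0::nat}. \<forall>e\<in>E. e \<inter> {x} \<noteq> {} \<and> e \<inter> (V - {x}) \<noteq> {} \<longrightarrow> 1 \<le> f e"
      proof (intro ballI impI)
        fix e assume "e \<in> E"
        have "leaves (lca T e) \<noteq> {}" using leaves_ne by blast
        then have "card (leaves (lca T e)) \<ge> 1" by (simp add: Suc_leI card_gt_0_iff)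
        then show "1 \<le> f e" unfolding f_def by simp
      qed
    qed auto
    then have "cut_weight V E w {x} \<le> 2 * hc_cost E w T" using cost by simp
    moreover have "cut_weight V E w {x} = vol E w {x}" using cut_single[OF edges xV] by (simp add: vol_def)
    moreover have "conductance V E w * vol E w {x} \<le> vol E w {x}"
      using mult_right_mono[OF Phi_le vol_nn[OF wnn, of "{x}"]] by simp
    ultimately show ?thesis using x by simp
  next
    case False
    then obtain L R where LR: "As ! k = Node L R" "vol E w (leaves L) \<le> h" "vol E w (leaves R) \<le> h"
      using lastf kl by auto
    have NT: "Node L R \<in> subtrees T" using sub kl(1) LR(1) by metis
    note cL = child_facts[OF dT VT NT, of L R E w] and cR = child_facts[OF dT VT NT, of R L E w]
    define S2 where "S2 b = (if b then leaves L else leaves R)" for b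
    define C2 where "C2 b = (if b then L else R)" for b
    let ?c = "real (card (leaves (Node L R)))"
    have "(\<Sum>b\<in>UNIV. ?c * cut_weight V E w (S2 b)) \<le> 2 * (\<Sum>e\<in>E. w e * f e)"
    proof (rule charge[OF _ finE c2 wnn _ _ fnn])
      show "\<forall>i\<in>UNIV. \<forall>j\<in>UNIV. i \<noteq> j \<longrightarrow> S2 i \<inter> S2 j = {}"
        using cL unfolding S2_def by auto
      show "\<forall>j\<in>UNIV. \<forall>e\<in>E. e \<inter> S2 j \<noteq> {} \<and> e \<inter> (V - S2 j) \<noteq> {} \<longrightarrow> ?c \<le> f e"
      proof (intro ballI impI)
        fix j e assume "e \<in> E" "e \<inter> S2 j \<noteq> {} \<and> e \<inter> (V - S2 j) \<noteq> {}"
        then show "?c \<le> f e" using nodeb[OF NT _ \<open>e \<in> E\<close>, of "C2 j"] unfolding S2_def C2_def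
          by (cases j) auto
      qed
    qed auto
    then have A: "?c * (cut_weight V E w (leaves L) + cut_weight V E w (leaves R)) \<le> 2 * hc_cost E w T"
      using cost by (simp add: S2_def UNIV_bool algebra_simps)
    have "conductance V E w * vol E w (leaves L) \<le> cut_weight V E w (leaves L)"
      using cond_bound[OF finV wnn] cL LR(2) h_def by blast
    moreover have "conductance V E w * vol E w (leaves R) \<le> cut_weight V E w (leaves R)"
      using cond_bound[OF finV wnn] cR LR(3) h_def by blast
    ultimately have "conductance V E w * vol E w (leaves (Node L R)) \<le>
        cut_weight V E w (leaves L) + cut_weight V E w (leaves R)"
      using cL by (simp add: algebra_simps)
    then have "?c * (conductance V E w * vol E w (leaves (Node L R))) \<le>
        ?c * (cut_weight V E w (leaves L) + cut_weight V E w (leaves R))"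
      by (intro mult_left_mono) auto
    then show ?thesis using A LR(1) by (simp add: algebra_simps)
  qed
  show ?thesis using c1 c2' unfolding S_def c_def by simp
qed


end
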